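(* Let $S(\mathbf{G},\mathbf{\Sigma})$ be a constrained switching system with $\mathbf{\Sigma}\subset\mathbb{R}^{n\times n}$, let $r>0$, and let $T=\lceil \log(n)/(2\log(1+r))\rceil$. Then the value $\gamma_*(S^T)$ of the $T$-product lift satisfies $$\hat\rho(S)\le\gamma_*(S^T)^{1/T}\le(1+r)\,\hat\rho(S).$$
   Context: An automaton $\mathbf{G}(V,E)$ is a strongly connected directed graph with finite node set $V$ and finite edge set $E$ of labelled edges $(v,w,\sigma)$, $\sigma$ indexing a matrix $A_\sigma\in\mathbf{\Sigma}$. A label sequence is accepted by $\mathbf{G}$ if it is the succession of labels along some path of $\mathbf{G}$ (no prescribed initial/final node). The constrained switching system $S(\mathbf{G},\mathbf{\Sigma})$ is $x_{t+1}=A_{\sigma(t)}x_t$ with accepted switching sequences; its CJSR is $\hat\rho(S)=\lim_{t\to\infty}\max\{\|A_{\sigma(t-1)}\cdots A_{\sigma(0)}\|^{1/t} : \sigma(0),\dots,\sigma(t-1)\text{ accepted}\}$. The $T$-product lift $S^T$ is the constrained switching system on the automaton with the same nodes $V$ and one edge $(v,w,\{\sigma(1)\dots\sigma(T)\})$ per path of length $T$ in $\mathbf{G}$ from $v$ to $w$ with labels $\sigma(1),\dots,\sigma(T)$, the matrix of that label being $A_{\sigma(T)}\cdots A_{\sigma(1)}$. For a constrained switching system $S'$ on automaton $(V',E')$, $\gamma_*(S')$ is the infimum of $\gamma$ such that there exist symmetric $Q_v\succ0$ ($v\in V'$) with $\gamma^2Q_v-A_\sigma^\top Q_wA_\sigma\succeq0$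 for all $(v,w,\sigma)\in E'$. *)

theory Defs
  imports "HOL-Analysis.Analysis"
begin

definition path_in :: "('v \<times> 'v \<times> 'l) set \<Rightarrow> 'v list \<Rightarrow> 'l list \<Rightarrow> bool" where
  "path_in E vs ls \<longleftrightarrow> length vs = Suc (length ls) \<and>
     (\<forall>i < length ls. (vs ! i, vs ! Suc i, ls ! i) \<in> E)"

text \<open>Label sequences accepted by the automaton (no prescribed initial/final node).\<close>
definition accepted :: "('v \<times> 'v \<times> 'l) set \<Rightarrow> 'l list \<Rightarrow> bool" where
  "accepted E ls \<longleftrightarrow> (\<exists>vs. path_in E vs ls)"

definition automaton :: "'v set \<Rightarrow> ('v \<times> 'v \<times> 'l) set \<Rightarrow> bool" where
  "automaton V E \<longleftrightarrow> finite V \<and> finite E \<and> V \<noteq> {} \<and>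
     (\<forall>(v, w, l) \<in> E. v \<in> V \<and> w \<in> V) \<and>
     (\<forall>v \<in> V. \<forall>w \<in> V. \<exists>vs ls. path_in E vs ls \<and> hd vs = v \<and> last vs = w)"

text \<open>Product A_{l(t-1)} ... A_{l(0)} of the matrices along a label sequence.\<close>
definition prodmat :: "('l \<Rightarrow> real^'n^'n) \<Rightarrow> 'l list \<Rightarrow> real^'n^'n" where
  "prodmat A ls = fold (\<lambda>l M. A l ** M) ls (mat 1)"

definition matnorm :: "real^'n^'n \<Rightarrow> real" where
  "matnorm M = onorm (\<lambda>x. M *v x)"

definition cjsr :: "('v \<times> 'v \<times> 'l) set \<Rightarrow> ('l \<Rightarrow> real^'n^'n) \<Rightarrow> real" where
  "cjsr E A = lim (\<lambda>t. Max ((\<lambda>ls. root t (matnorm (prodmat A ls))) `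
                          {ls. length ls = t \<and> accepted E ls}))"

text \<open>T-product lift: same nodes, one edge per path of length T, labelled by its label word.\<close>
definition lift_edges :: "('v \<times> 'v \<times> 'l) set \<Rightarrow> nat \<Rightarrow> ('v \<times> 'v \<times> 'l list) set" where
  "lift_edges E T = {(v, w, ls). length ls = T \<and>
      (\<exists>vs. path_in E vs ls \<and> hd vs = v \<and> last vs = w)}"

definition psd :: "real^'n^'n \<Rightarrow> bool" where
  "psd M \<longleftrightarrow> (\<forall>x. x \<bullet> (M *v x) \<ge> 0)"

definition pd :: "real^'n^'n \<Rightarrow> bool" where
  "pd M \<longleftrightarrow> (\<forall>x. x \<noteq> 0 \<longrightarrow> x \<bullet> (M *v x) > 0)"

definition gamma_star :: "'v set \<Rightarrow> ('v \<times> 'v \<times> 'l) set \<Rightarrow> ('l \<Rightarrow> real^'n^'n) \<Rightarrow> real" where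
  "gamma_star V E A = Inf {\<gamma>. \<gamma> \<ge> 0 \<and> (\<exists>Q :: 'v \<Rightarrow> real^'n^'n.
      (\<forall>v \<in> V. transpose (Q v) = Q v \<and> pd (Q v)) \<and>
      (\<forall>(v, w, l) \<in> E. psd (\<gamma>\<^sup>2 *\<^sub>R Q v - transpose (A l) ** Q w ** A l)))}"

end

theory Submission
  imports Defs
begin


definition outer :: "real^'n \<Rightarrow> real^'n \<Rightarrow> real^'n^'n" where
  "outer a b = (\<chi> i j. a$i * b$j)"

lemma det_row_axis:
  fixes b :: "real^'n"
  shows "det (\<chi> i. if i = k then b else axis i 1 :: real^'n^'n) = b$k"
proof -
  let ?A = "(\<chi> i. if i = k then b$k *s axis k 1 else axis i 1) :: real^'n^'n"
  let ?x = "(\<Sum>j\<in>UNIV-{k}. b$j *s axis j (1::real))"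
  have "?x \<in> vec.span {row j ?A |j. j \<noteq> k}"
  proof (rule vec.span_sum)
    fix j assume "j \<in> UNIV - {k}"
    then have jk: "j \<noteq> k" by simp
    have rj: "row j ?A = axis j 1" using jk by (simp add: row_def vec_eq_iff)
    have "axis j 1 \<in> {row j ?A |j. j \<noteq> k}"
      by (rule CollectI, rule exI[of _ j]) (use jk rj in simp)
    then show "b$j *s axis j (1::real) \<in> vec.span {row j ?A |j. j \<noteq> k}"
      by (rule vec.span_scale[OF vec.span_base])
  qed
  then have "det (\<chi> i. if i = k then row k ?A + ?x else row i ?A) = det ?A"
    by (rule det_row_span)
  moreover have "(\<chi> i. if i = k then row k ?A + ?x else row i ?A) = (\<chi> i. if i = k then b else axis i 1)"
  proof -
    have "b$k *s axis k 1 + ?x = b"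
    proof -
      have "b = (\<Sum>j\<in>UNIV. b$j *s axis j (1::real))"
        by (simp add: vec_eq_iff axis_def sum_component if_distrib cong: if_cong)
      also have "\<dots> = b$k *s axis k 1 + ?x"
        by (subst sum.remove[of _ k]) auto
      finally show ?thesis by simp
    qed
    then show ?thesis by (auto simp: vec_eq_iff row_def)
  qed
  moreover have "det ?A = b$k * det (\<chi> i. if i = k then axis k 1 else axis i (1::real) :: real^'n^'n)"
    by (rule det_row_mul)
  moreover have "(\<chi> i. if i = k then axis k 1 else axis i (1::real) :: real^'n^'n) = mat 1"
    by (auto simp: vec_eq_iff mat_def axis_def)
  ultimately show ?thesis by simp
qed

lemma det_rows_aux:
  fixes a b :: "real^'n"
  assumes "finite T" "k \<notin> T"
  shows "det (\<chi> i. if i = k then b else if i \<in> T then axis i 1 + a$i *s b else axis i 1 :: real^'n^'n)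
       = b$k"
  using assms
proof (induction T rule: finite_induct)
  case empty
  then show ?case using det_row_axis[of k b] by (simp cong: if_cong)
next
  case (insert j T)
  let ?c = "\<lambda>i. if i = k then b else if i \<in> T then axis i 1 + a$i *s b else axis i (1::real)"
  have jk: "j \<noteq> k" using insert by auto
  have e1: "(\<chi> i. if i = k then b else if i \<in> insert j T then axis i 1 + a$i *s b else axis i 1 :: real^'n^'n)
     = (\<chi> i. if i = j then axis i 1 + a$i *s b else ?c i)"
    using jk by (intro Cart_lambda_cong) auto
  have e2: "(\<chi> i. if i = j then axis i 1 else ?c i) = 
     (\<chi> i. if i = k then b else if i \<in> T then axis i 1 + a$i *s b else axis i 1 :: real^'n^'n)"
    using insert jk by (intro Cart_lambda_cong) auto
  have e3: "(\<chi> i. if i = j then a$i *s b else ?c i) = (\<chi> i. if i = j then a$j *s b else ?c i)"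
    by (intro Cart_lambda_cong) auto
  have z: "det (\<chi> i. if i = j then b else ?c i) = 0"
    by (rule det_identical_rows[OF jk]) (use jk in \<open>simp add: row_def vec_eq_iff\<close>)
  show ?case
    unfolding e1 det_row_add[of j] e2 e3 det_row_mul[of j] z using insert by simp
qed

lemma det_I_outer:
  fixes a b :: "real^'n"
  shows "det (mat 1 + outer a b) = 1 + a \<bullet> b"
proof -
  have main: "finite T \<Longrightarrow> det (\<chi> i. if i \<in> T then axis i 1 + a$i *s b else axis i 1 :: real^'n^'n)
        = 1 + (\<Sum>i\<in>T. a$i * b$i)" for T
  proof (induction T rule: finite_induct)
    case empty
    have "(\<chi> i. if i \<in> {} then axis i 1 + a$i *s b else axis i 1 :: real^'n^'n) = mat 1"
      by (auto simp: vec_eq_iff mat_def axis_def)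
    then show ?case by simp
  next
    case (insert k T)
    let ?c = "\<lambda>i. if i \<in> T then axis i 1 + a$i *s b else axis i (1::real)"
    have e1: "(\<chi> i. if i \<in> insert k T then axis i 1 + a$i *s b else axis i 1 :: real^'n^'n)
       = (\<chi> i. if i = k then axis i 1 + a$i *s b else ?c i)"
      by (intro Cart_lambda_cong) auto
    have e2: "(\<chi> i. if i = k then axis i 1 else ?c i) = (\<chi> i. ?c i)"
      using insert by (intro Cart_lambda_cong) auto
    have e3: "(\<chi> i. if i = k then a$i *s b else ?c i) = (\<chi> i. if i = k then a$k *s b else ?c i)"
      by (intro Cart_lambda_cong) auto
    have e4: "det (\<chi> i. if i = k then b else ?c i) = b$k"
      using det_rows_aux[OF insert(1,2), of b a] by simp
    show ?case unfolding e1 det_row_add[of k] e2 e3 det_row_mul[of k] e4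
      using insert by (simp add: algebra_simps)
  qed
  have "mat 1 + outer a b = (\<chi> i. if i \<in> UNIV then axis i 1 + a$i *s b else axis i 1 :: real^'n^'n)"
    by (auto simp: vec_eq_iff mat_def axis_def outer_def)
  then show ?thesis using main[of UNIV] by (simp add: inner_vec_def)
qed


definition qf :: "real^'n^'n \<Rightarrow> real^'n \<Rightarrow> real" where
  "qf P x = x \<bullet> (P *v x)"

lemma qf_sum: "qf P x = (\<Sum>i\<in>UNIV. \<Sum>j\<in>UNIV. x$i * P$i$j * x$j)"
  by (simp add: qf_def inner_vec_def matrix_vector_mult_def sum_distrib_left mult.assoc)

lemma continuous_qf: "continuous_on S (\<lambda>P. qf P x)"
  unfolding qf_sum by (intro continuous_intros)

lemma continuous_det: "continuous_on S (det :: real^'n^'n \<Rightarrow> real)"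
  unfolding det_def by (intro continuous_intros)

lemma sym_inner: fixes P :: "real^'n^'n" assumes "transpose P = P" shows "y \<bullet> (P *v x) = x \<bullet> (P *v y)"
proof -
  have "y \<bullet> (P *v x) = (y v* P) \<bullet> x" by (simp add: dot_lmul_matrix)
  also have "y v* P = P *v y" using vector_transpose_matrix[of y P] assms by simp
  finally show ?thesis by (simp add: inner_commute)
qed

lemma outer_mult: "outer a b *v x = (b \<bullet> x) *s a"
  by (simp add: vec_eq_iff outer_def matrix_vector_mult_def inner_vec_def sum_distrib_left mult_ac)

lemma qf_outer: "qf (outer a a) x = (a \<bullet> x)^2"
  by (simp add: qf_def outer_mult scalar_mult_eq_scaleR power2_eq_square inner_commute)

lemma qf_lin: "qf (c *\<^sub>R P + d *\<^sub>R Q) x = c * qf P x + d * qf Q x"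
  by (simp add: qf_def matrix_vector_mult_add_rdistrib scaleR_matrix_vector_assoc[symmetric] inner_add_right)

lemma qf_mat1: "qf (mat 1) x = (norm x)^2"
  by (simp add: qf_def power2_norm_eq_inner)

lemma transpose_outer: "transpose (outer a a) = outer a a"
  by (simp add: vec_eq_iff outer_def transpose_def mult.commute)

lemma entry_inner: "axis i 1 \<bullet> (P *v axis j 1) = P$i$j"
  by (simp add: matrix_vector_mult_basis inner_axis' column_def)

lemma psd_CS:
  assumes sym: "transpose P = P" and ps: "psd P"
  shows "(x \<bullet> (P *v y))^2 \<le> qf P x * qf P y"
proof -
  let ?b = "x \<bullet> (P *v y)"
  have q: "0 \<le> qf P x + 2*t*?b + t^2 * qf P y" for t
  proof -
    have "0 \<le> qf P (x + t *\<^sub>R y)" using ps by (simp add: psd_def qf_def)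
    also have "qf P (x + t *\<^sub>R y) = qf P x + 2*t*?b + t^2 * qf P y"
      using sym_inner[OF sym, of y x]
      by (simp add: qf_def matrix_vector_mult_add_rdistrib matrix_vector_right_distrib
          matrix_vector_mult_scaleR inner_add_left inner_add_right power2_eq_square algebra_simps)
    finally show ?thesis .
  qed
  have qy: "0 \<le> qf P y" "0 \<le> qf P x" using ps by (auto simp: psd_def qf_def)
  show ?thesis
  proof (cases "qf P y = 0")
    case True
    have "?b = 0"
    proof (rule ccontr)
      assume nz: "?b \<noteq> 0"
      have "0 \<le> qf P x + 2 * (-(qf P x + 1)/(2*?b)) * ?b" using q[of "-(qf P x + 1)/(2*?b)"] True by simp
      also have "\<dots> = -1" using nz by (simp add: field_simps)
      finally show False by simp
    qed
    then show ?thesis using True by simp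
  next
    case False
    then have pos: "qf P y > 0" using qy by simp
    have "0 \<le> qf P x + 2*(-?b/qf P y)*?b + (-?b/qf P y)^2 * qf P y" by (rule q)
    also have "\<dots> = qf P x - ?b^2 / qf P y" using pos by (simp add: field_simps power2_eq_square)
    finally have "?b^2 / qf P y \<le> qf P x" by simp
    then show ?thesis using pos by (simp add: field_simps mult.commute)
  qed
qed

lemma det_scaleR: "det (c *\<^sub>R A) = c ^ CARD('n) * det (A :: real^'n^'n)"
proof -
  have "c *\<^sub>R A = (\<chi> i. c *s (\<chi> j. A$i$j))" by (simp add: vec_eq_iff)
  moreover have "(\<chi> i. (\<chi> j. A$i$j)) = A" by (simp add: vec_eq_iff)
  ultimately show ?thesis using det_rows_mul[of "\<lambda>i. c" "\<lambda>i. (\<chi> j. A$i$j)"] by simp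
qed

lemma mult_outer: "P ** outer a b = outer (P *v a) b"
  by (simp add: vec_eq_iff outer_def matrix_matrix_mult_def matrix_vector_mult_def sum_distrib_left mult_ac)

lemma det_rank1_update:
  fixes P :: "real^'n^'n"
  assumes PQ: "P ** Q = mat 1" and d: "d < 1"
  shows "det ((1-d) *\<^sub>R P + d *\<^sub>R outer t t) = det P * (1-d)^CARD('n) * (1 + d/(1-d) * (t \<bullet> (Q *v t)))"
proof -
  let ?u = "Q *v t"
  have Pu: "P *v ?u = t" by (simp add: matrix_vector_mul_assoc PQ)
  have "(1-d) *\<^sub>R P + d *\<^sub>R outer t t = P ** ((1-d) *\<^sub>R (mat 1 + outer ((d/(1-d)) *\<^sub>R ?u) t))"
  proof -
    have "P ** ((1-d) *\<^sub>R (mat 1 + outer ((d/(1-d)) *\<^sub>R ?u) t)) = (1-d) *\<^sub>R (P ** (mat 1 + outer ((d/(1-d)) *\<^sub>R ?u) t))"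
      by (simp add: vec_eq_iff matrix_matrix_mult_def sum_distrib_left mult_ac)
    also have "P ** (mat 1 + outer ((d/(1-d)) *\<^sub>R ?u) t) = P + outer ((d/(1-d)) *\<^sub>R t) t"
      by (simp add: matrix_add_ldistrib mult_outer matrix_vector_mult_scaleR Pu)
    also have "(1-d) *\<^sub>R (P + outer ((d/(1-d)) *\<^sub>R t) t) = (1-d) *\<^sub>R P + d *\<^sub>R outer t t"
    proof -
      have c: "(1-d) * (d/(1-d)) = d" using d by simp
      have o: "outer ((d/(1-d)) *\<^sub>R t) t = (d/(1-d)) *\<^sub>R outer t t" by (simp add: vec_eq_iff outer_def)
      have "(1-d) *\<^sub>R (P + outer ((d/(1-d)) *\<^sub>R t) t) = (1-d) *\<^sub>R P + ((1-d) * (d/(1-d))) *\<^sub>R outer t t"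
        unfolding o by (simp add: scaleR_add_right)
      then show ?thesis unfolding c .
    qed
    finally show ?thesis by simp
  qed
  then have "det ((1-d) *\<^sub>R P + d *\<^sub>R outer t t) = det P * ((1-d)^CARD('n) * (1 + ((d/(1-d)) *\<^sub>R ?u) \<bullet> t))"
    by (simp add: det_mul det_scaleR det_I_outer)
  then show ?thesis by (simp add: inner_commute)
qed


lemma norm_mat_le:
  fixes P :: "real^'n^'n"
  assumes "\<And>i j. \<bar>P$i$j\<bar> \<le> c"
  shows "norm P \<le> real CARD('n) * (real CARD('n) * c)"
proof -
  have "norm P \<le> (\<Sum>i\<in>UNIV. \<bar>norm (P$i)\<bar>)" unfolding norm_vec_def by (rule L2_set_le_sum_abs)
  also have "\<dots> \<le> (\<Sum>i\<in>(UNIV::'n set). real CARD('n) * c)"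
  proof (rule sum_mono)
    fix i
    have "norm (P$i) \<le> (\<Sum>j\<in>UNIV. \<bar>P$i$j\<bar>)" by (rule norm_le_l1_cart)
    also have "\<dots> \<le> (\<Sum>j\<in>(UNIV::'n set). c)" using assms by (intro sum_mono) auto
    finally show "\<bar>norm (P$i)\<bar> \<le> real CARD('n) * c" by simp
  qed
  finally show ?thesis by simp
qed

lemma K_compact:
  fixes N :: "real^'n \<Rightarrow> real"
  assumes up: "\<And>x. N x \<le> C0 * norm x" and lo: "\<And>x. norm x \<le> N x"
  shows "compact {P::real^'n^'n. transpose P = P \<and> psd P \<and> (\<forall>x. qf P x \<le> (N x)^2)}"
    (is "compact ?K")
proof -
  have eq: "?K = {P::real^'n^'n. (\<forall>i j. P$i$j = P$j$i) \<and> (\<forall>x. 0 \<le> qf P x) \<and> (\<forall>x. qf P x \<le> (N x)^2)}"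
    by (auto simp: psd_def qf_def vec_eq_iff transpose_def)
  have cl: "closed ?K" unfolding eq
    by (intro closed_Collect_conj closed_Collect_all closed_Collect_eq closed_Collect_le
        continuous_intros continuous_qf)
  have "bounded ?K"
  proof -
    have "norm P \<le> real CARD('n) * (real CARD('n) * (C0 * norm (1::real))^2)" if "P \<in> ?K" for P
    proof (rule norm_mat_le)
      fix i j
      have sym: "transpose P = P" and ps: "psd P" and b: "\<And>x. qf P x \<le> (N x)^2" using that by auto
      have bi: "qf P (axis i 1) \<le> (C0 * norm (1::real))^2" for i
      proof -
        have "0 \<le> N (axis i 1)" using lo[of "axis i 1"] norm_ge_zero order_trans by blast
        have "qf P (axis i 1) \<le> (N (axis i 1))^2" by (rule b)
        also have "\<dots> \<le> (C0 * norm (1::real))^2"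
          using up[of "axis i (1::real)"] \<open>0 \<le> N (axis i 1)\<close> by (simp add: power_mono)
        finally show ?thesis .
      qed
      have "(P$i$j)^2 \<le> qf P (axis i 1) * qf P (axis j 1)"
        using psd_CS[OF sym ps, of "axis i 1" "axis j 1"] by (simp add: entry_inner)
      also have "\<dots> \<le> (C0 * norm (1::real))^2 * (C0 * norm (1::real))^2"
        using bi[of i] bi[of j] ps by (intro mult_mono) (auto simp: psd_def qf_def)
      finally have "(P$i$j)^2 \<le> ((C0 * norm (1::real))^2)^2" by (simp add: power2_eq_square)
      then show "\<bar>P$i$j\<bar> \<le> (C0 * norm (1::real))^2"
        using power2_le_imp_le[of "\<bar>P$i$j\<bar>" "(C0 * norm (1::real))^2"] by simp
    qed
    then show ?thesis unfolding bounded_iff by blast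
  qed
  with cl show ?thesis by (simp add: compact_eq_bounded_closed)
qed


lemma N_basic:
  fixes N :: "real^'n \<Rightarrow> real"
  assumes tri: "\<And>x y. N (x+y) \<le> N x + N y" and hom: "\<And>c x. N (c *\<^sub>R x) = \<bar>c\<bar> * N x"
    and lo: "\<And>x. norm x \<le> N x" and up: "\<And>x. N x \<le> C0 * norm x"
  shows "N 0 = 0" "\<And>x. N (-x) = N x" "\<And>x. 0 \<le> N x" "C0 \<ge> 1" "continuous_on UNIV N"
proof -
  show n0: "N 0 = 0" using hom[of 0 0] by simp
  show nm: "N (-x) = N x" for x using hom[of "-1" x] by simp
  show nn: "0 \<le> N x" for x using lo[of x] norm_ge_zero[of x] by linarith
  have "norm (axis undefined (1::real) :: real^'n) \<le> C0 * norm (axis undefined (1::real) :: real^'n)"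
    by (rule order_trans[OF lo up])
  then show c0: "C0 \<ge> 1" by (simp add: norm_axis_1)
  have "C0-lipschitz_on UNIV N"
  proof (rule lipschitz_onI)
    fix x y :: "real^'n"
    have "N x \<le> N (x - y) + N y" using tri[of "x-y" y] by simp
    moreover have "N y \<le> N (x - y) + N x" using tri[of "y-x" x] nm[of "x-y"] by simp
    moreover have "N (x - y) \<le> C0 * norm (x - y)" by (rule up)
    ultimately show "dist (N x) (N y) \<le> C0 * dist x y"
      by (simp add: dist_real_def dist_norm abs_le_iff)
  qed (use c0 in simp)
  then show "continuous_on UNIV N" by (rule lipschitz_on_continuous_on)
qed

lemma functional_exists:
  fixes N :: "real^'n \<Rightarrow> real"
  assumes tri: "\<And>x y. N (x+y) \<le> N x + N y" and hom: "\<And>c x. N (c *\<^sub>R x) = \<bar>c\<bar> * N x"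
    and lo: "\<And>x. norm x \<le> N x" and up: "\<And>x. N x \<le> C0 * norm x"
    and lam: "0 < lam" "lam < N y"
  shows "\<exists>t. (\<forall>x. (t \<bullet> x)^2 \<le> (N x)^2) \<and> t \<bullet> y > lam"
proof -
  note nb = N_basic[OF tri hom lo up]
  define B where "B = {x. N x \<le> 1}"
  define z where "z = (1/lam) *\<^sub>R y"
  have Nz: "N z > 1" using lam by (simp add: z_def hom field_simps)
  have cvx: "convex B" unfolding B_def convex_def
  proof (intro allI impI ballI CollectI; clarify)
    fix x w :: "real^'n" and u v :: real
    assume "N x \<le> 1" "N w \<le> 1" "0 \<le> u" "0 \<le> v" "u + v = 1"
    have "N (u *\<^sub>R x + v *\<^sub>R w) \<le> u * N x + v * N w"
      using tri[of "u *\<^sub>R x" "v *\<^sub>R w"] hom[of u x] hom[of v w] \<open>0\<le>u\<close> \<open>0\<le>v\<close> by simp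
    also have "\<dots> \<le> u * 1 + v * 1" using \<open>N x \<le> 1\<close> \<open>N w \<le> 1\<close> \<open>0\<le>u\<close> \<open>0\<le>v\<close>
      by (intro add_mono mult_left_mono) auto
    finally show "N (u *\<^sub>R x + v *\<^sub>R w) \<le> 1" using \<open>u+v=1\<close> by simp
  qed
  have clo: "closed B" unfolding B_def
    by (intro closed_Collect_le nb(5) continuous_on_const)
  have ne2: "0 \<in> B" using nb(1) by (simp add: B_def)
  then have ne: "B \<noteq> {}" "0 \<in> B" by auto
  have zB: "z \<notin> B" using Nz by (simp add: B_def)
  obtain a b y0 where ab: "y0 \<in> B" "a \<bullet> z < b" "a \<bullet> y0 = b" "\<forall>x\<in>B. a \<bullet> x \<ge> b"
    using supporting_hyperplane_closed_point[OF cvx clo ne(1) zB] by blast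
  have b0: "b \<le> 0" using ab(4) ne(2) by force
  have bneg: "b < 0"
  proof (rule ccontr)
    assume "\<not> b < 0"
    then have b: "b = 0" using b0 by simp
    then have anz: "a \<noteq> 0" using ab(2) by auto
    define x where "x = (1 / (C0 * norm a)) *\<^sub>R a"
    have C0: "C0 \<ge> 1" by (rule nb(4))
    have "N x \<le> C0 * norm x" by (rule up)
    also have "\<dots> = 1" using anz C0 by (simp add: x_def)
    finally have "x \<in> B" "-x \<in> B" using nb(2)[of x] by (auto simp: B_def)
    then have "a \<bullet> (-x) \<ge> 0" using ab(4) b by blast
    moreover have "a \<bullet> x > 0" using anz C0 by (simp add: x_def inner_commute)
    ultimately show False by simp
  qed
  define t where "t = (1/b) *\<^sub>R a"
  have tB: "t \<bullet> x \<le> 1" if "x \<in> B" for x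
  proof -
    have "a \<bullet> x \<ge> b" using ab(4) that by blast
    then show ?thesis using bneg by (simp add: t_def divide_le_eq_1_neg field_simps)
  qed
  have tN: "t \<bullet> x \<le> N x" for x
  proof (cases "N x = 0")
    case True
    then have "x = 0" using lo[of x] by simp
    then show ?thesis using True by simp
  next
    case False
    then have pos: "N x > 0" using nb(3)[of x] by simp
    have "(1 / N x) *\<^sub>R x \<in> B" using pos by (simp add: B_def hom)
    then have "t \<bullet> ((1 / N x) *\<^sub>R x) \<le> 1" by (rule tB)
    then show ?thesis using pos by (simp add: field_simps)
  qed
  have "(t \<bullet> x)^2 \<le> (N x)^2" for x
  proof -
    have "t \<bullet> x \<le> N x" "- (t \<bullet> x) \<le> N x" using tN[of x] tN[of "-x"] nb(2)[of x] by auto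
    then have "\<bar>t \<bullet> x\<bar> \<le> N x" by simp
    then have "\<bar>t \<bullet> x\<bar>^2 \<le> (N x)^2" by (rule power_mono) simp
    then show ?thesis by simp
  qed
  moreover have "t \<bullet> y > lam"
  proof -
    have "t \<bullet> z > 1" using ab(2) bneg by (simp add: t_def field_simps)
    moreover have "t \<bullet> y = lam * (t \<bullet> z)" using lam by (simp add: z_def)
    ultimately show ?thesis using lam by simp
  qed
  ultimately show ?thesis by blast
qed


lemma arith_det:
  fixes s d :: real and N :: nat
  assumes N: "N \<ge> 1" and sn: "s > real N" and d: "0 < d" "d \<le> 1/2" "d \<le> (s - real N) / (2 * real N * s)"
  shows "(1-d)^N * (1 + d/(1-d) * s) > 1"
proof -
  define n where "n = real N"
  have n1: "n \<ge> 1" using N by (simp add: n_def)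
  have sn': "s > n" using sn by (simp add: n_def)
  have d3: "d \<le> (s - n) / (2 * n * s)" using d(3) by (simp add: n_def)
  have s1: "s - 1 > 0" "s > 0" using sn' n1 by auto
  have e: "(1-d)^N * (1 + d/(1-d) * s) = (1-d)^(N-1) * (1 + d * (s - 1))"
  proof -
    obtain m where m: "N = Suc m" using N by (cases N) auto
    have e1: "(1-d)^N = (1-d)^(N-1) * (1-d)"
      unfolding m by simp
    have nz: "1 - d \<noteq> 0" using d by simp
    have "(1-d) * (d/(1-d) * s) = d * s" using nz by simp
    then have e2: "(1-d) * (1 + d/(1-d) * s) = 1 + d * (s - 1)"
      by (simp add: algebra_simps)
    show ?thesis unfolding e1 mult.assoc e2 ..
  qed
  have b: "(1-d)^(N-1) \<ge> 1 - (n-1) * d"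
  proof -
    have h: "1 + real (N-1) * (-d) \<le> (1 - d)^(N-1)"
      using Bernoulli_inequality[of "-d" "N-1"] d by simp
    have eq: "real (N-1) = n - 1" using N by (simp add: n_def of_nat_diff)
    have eq2: "1 - (n-1)*d = 1 + real (N-1) * (-d)" unfolding eq by simp
    show ?thesis using h eq2 by linarith
  qed
  have p: "(1 - (n-1) * d) * (1 + d * (s - 1)) > 1"
  proof -
    have "(n-1)*(s-1) \<le> n * s" using n1 s1 by (intro mult_mono) auto
    moreover have "n * s > 0" using n1 s1 by simp
    ultimately have lt: "(n-1)*(s-1) < 2 * n * s" by simp
    have nz: "2 * n * s \<noteq> 0" using n1 s1 by simp
    have "(n-1)*(s-1)*d \<le> (n-1)*(s-1)*((s - n) / (2 * n * s))"
      using d3 n1 s1 by (intro mult_left_mono) auto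
    also have "\<dots> < (2 * n * s)*((s - n) / (2 * n * s))"
      using lt sn' n1 s1 by (intro mult_strict_right_mono) auto
    also have "\<dots> = s - n" using nz by simp
    finally have "(n-1)*(s-1)*d < s - n" .
    then have "0 < d * ((s - n) - (n-1)*(s-1)*d)" using d by simp
    moreover have "(1 - (n-1) * d) * (1 + d * (s - 1)) = 1 + d * ((s - n) - (n-1)*(s-1)*d)"
      by (simp add: algebra_simps)
    ultimately show ?thesis by simp
  qed
  have "(1 - (n-1) * d) * (1 + d * (s - 1)) \<le> (1-d)^(N-1) * (1 + d * (s - 1))"
    using b s1 d by (intro mult_right_mono) auto
  then show ?thesis using e p by linarith
qed


lemma john:
  fixes N :: "real^'n \<Rightarrow> real"
  assumes tri: "\<And>x y. N (x+y) \<le> N x + N y" and hom: "\<And>c x. N (c *\<^sub>R x) = \<bar>c\<bar> * N x"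
    and lo: "\<And>x. norm x \<le> N x" and up: "\<And>x. N x \<le> C0 * norm x"
  shows "\<exists>P. transpose P = P \<and> pd P \<and> (\<forall>x. qf P x \<le> (N x)^2) \<and> (\<forall>x. (N x)^2 \<le> CARD('n) * qf P x)"
proof -
  note nb = N_basic[OF tri hom lo up]
  define K where "K = {P::real^'n^'n. transpose P = P \<and> psd P \<and> (\<forall>x. qf P x \<le> (N x)^2)}"
  have cK: "compact K" unfolding K_def by (rule K_compact[OF up lo])
  have IK: "mat 1 \<in> K"
    using lo by (auto simp: K_def psd_def qf_mat1[unfolded qf_def] qf_mat1 intro!: power_mono)
  obtain P where PK: "P \<in> K" and Pmax: "\<And>Q. Q \<in> K \<Longrightarrow> det Q \<le> det P"
    using continuous_attains_sup[OF cK _ continuous_det] IK by blast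
  have sym: "transpose P = P" and ps: "psd P" and Pb: "\<And>x. qf P x \<le> (N x)^2"
    using PK by (auto simp: K_def)
  have dP: "det P \<ge> 1" using Pmax[OF IK] by simp
  then have "invertible P" by (simp add: invertible_det_nz)
  then obtain P' where PP': "P ** P' = mat 1" "P' ** P = mat 1" unfolding invertible_def by blast
  have pdP: "pd P" unfolding pd_def
  proof (intro allI impI)
    fix x :: "real^'n" assume xnz: "x \<noteq> 0"
    show "0 < x \<bullet> (P *v x)"
    proof (rule ccontr)
      assume "\<not> 0 < x \<bullet> (P *v x)"
      then have q0: "qf P x = 0" using ps by (auto simp: psd_def qf_def intro: antisym)
      have "((P *v x) \<bullet> (P *v x))^2 \<le> qf P (P *v x) * qf P x" by (rule psd_CS[OF sym ps])
      then have "(P *v x) \<bullet> (P *v x) = 0" using q0 by simp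
      then have "P *v x = 0" by simp
      then have "P' *v (P *v x) = 0" by simp
      then have "x = 0" by (simp add: matrix_vector_mul_assoc PP'(2))
      with xnz show False by simp
    qed
  qed
  have upper: "(N y)^2 \<le> CARD('n) * qf P y" for y
  proof (rule ccontr)
    assume "\<not> (N y)^2 \<le> CARD('n) * qf P y"
    then have viol: "(N y)^2 > CARD('n) * qf P y" by simp
    define n where "n = real CARD('n)"
    have n1: "n \<ge> 1" by (simp add: n_def)
    have qy: "qf P y \<ge> 0" using ps by (simp add: psd_def qf_def)
    have Ny: "N y \<ge> 0" by (rule nb(3))
    define s0 where "s0 = sqrt (n * qf P y)"
    have s0: "s0 \<ge> 0" "s0^2 = n * qf P y" using qy n1 by (auto simp: s0_def)
    have "s0 < N y"
    proof (rule ccontr)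
      assume "\<not> s0 < N y"
      then have "(N y)^2 \<le> s0^2" using Ny by (simp add: power_mono)
      then show False using viol s0 by (simp add: n_def)
    qed
    define lam where "lam = (s0 + N y) / 2"
    have lam: "0 < lam" "lam < N y" "s0 < lam" using \<open>s0 < N y\<close> s0 by (auto simp: lam_def)
    obtain t where tN: "\<And>x. (t \<bullet> x)^2 \<le> (N x)^2" and ty: "t \<bullet> y > lam"
      using functional_exists[OF tri hom lo up lam(1,2)] by blast
    have "(t \<bullet> y)^2 > s0^2"
      using power_strict_mono[of s0 "t \<bullet> y" 2] ty lam s0 by simp
    then have ty2: "(t \<bullet> y)^2 > n * qf P y" using s0 by simp
    define u where "u = P' *v t"
    have Pu: "P *v u = t" by (simp add: u_def matrix_vector_mul_assoc PP'(1))
    define s where "s = t \<bullet> u"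
    have squ: "s = qf P u" by (simp add: s_def qf_def Pu inner_commute)
    have "t \<bullet> y = u \<bullet> (P *v y)" using sym_inner[OF sym, of u y] by (simp add: Pu inner_commute)
    then have "(t \<bullet> y)^2 \<le> s * qf P y" using psd_CS[OF sym ps, of u y] squ by simp
    then have "n * qf P y < s * qf P y" using ty2 by simp
    then have sn: "s > n" by (rule mult_right_less_imp_less[OF _ qy])
    define d where "d = min (1/2) ((s - n) / (2 * n * s))"
    have s1: "s - 1 > 0" "s > 0" using sn n1 by auto
    have d: "0 < d" "d \<le> 1/2" "d \<le> (s - n) / (2 * n * s)"
      using sn n1 s1 by (auto simp: d_def)
    define Q where "Q = (1-d) *\<^sub>R P + d *\<^sub>R outer t t"
    have QK: "Q \<in> K" unfolding K_def
    proof (intro CollectI conjI allI)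
      show "transpose Q = Q"
        using sym transpose_outer[of t] by (simp add: Q_def transpose_def vec_eq_iff)
      show "psd Q" unfolding psd_def
      proof
        fix x
        have "x \<bullet> (Q *v x) = qf Q x" by (simp add: qf_def)
        also have "\<dots> = (1-d) * qf P x + d * qf (outer t t) x" by (simp add: Q_def qf_lin)
        finally have "x \<bullet> (Q *v x) = (1-d) * qf P x + d * qf (outer t t) x" .
        moreover have "qf P x \<ge> 0" using ps by (simp add: psd_def qf_def)
        ultimately show "0 \<le> x \<bullet> (Q *v x)" using d by (simp add: qf_outer)
      qed
      fix x
      have "qf Q x = (1-d) * qf P x + d * (t \<bullet> x)^2" by (simp add: Q_def qf_lin qf_outer)
      also have "\<dots> \<le> (1-d) * (N x)^2 + d * (N x)^2"
        using d Pb[of x] tN[of x] by (intro add_mono mult_left_mono) auto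
      finally show "qf Q x \<le> (N x)^2" by (simp add: algebra_simps)
    qed
    have dQ: "det Q = det P * (1-d)^CARD('n) * (1 + d/(1-d) * s)"
      unfolding Q_def s_def u_def using det_rank1_update[OF PP'(1), of d t] d by simp
    have "(1-d)^CARD('n) * (1 + d/(1-d) * s) > 1"
      by (rule arith_det) (use sn d in \<open>auto simp: n_def\<close>)
    then have "det P * 1 < det P * ((1-d)^CARD('n) * (1 + d/(1-d) * s))"
      using dP by (intro mult_strict_left_mono) auto
    then have "det Q > det P" using dQ by (simp add: mult.assoc)
    with Pmax[OF QK] show False by simp
  qed
  show ?thesis using sym pdP Pb upper by blast
qed


lemma path_in_append:
  assumes p1: "path_in E vs ls" and p2: "path_in E ws ms" and j: "last vs = hd ws"
  shows "path_in E (vs @ tl ws) (ls @ ms)"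
proof -
  have l1: "length vs = Suc (length ls)" and e1: "\<And>i. i < length ls \<Longrightarrow> (vs!i, vs!Suc i, ls!i) \<in> E"
    using p1 by (auto simp: path_in_def)
  have l2: "length ws = Suc (length ms)" and e2: "\<And>i. i < length ms \<Longrightarrow> (ws!i, ws!Suc i, ms!i) \<in> E"
    using p2 by (auto simp: path_in_def)
  have vl: "vs ! length ls = ws ! 0"
  proof -
    have "vs \<noteq> []" "ws \<noteq> []" using l1 l2 by auto
    then have "last vs = vs ! length ls" "hd ws = ws ! 0" using l1 by (auto simp: last_conv_nth hd_conv_nth)
    then show ?thesis using j by simp
  qed
  have tl: "tl ws ! i = ws ! Suc i" if "i < length ms" for i using that l2 by (simp add: nth_tl)
  show ?thesis unfolding path_in_def
  proof (intro conjI allI impI)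
    show "length (vs @ tl ws) = Suc (length (ls @ ms))" using l1 l2 by simp
    fix i assume i: "i < length (ls @ ms)"
    show "((vs @ tl ws) ! i, (vs @ tl ws) ! Suc i, (ls @ ms) ! i) \<in> E"
    proof (cases "i < length ls")
      case True
      then show ?thesis using e1[OF True] l1 by (simp add: nth_append)
    next
      case False
      define k where "k = i - length ls"
      have k: "k < length ms" "i = length ls + k" using False i by (auto simp: k_def)
      have a: "(vs @ tl ws) ! i = ws ! k"
      proof (cases k)
        case 0 then show ?thesis using k l1 vl by (simp add: nth_append)
      next
        case (Suc k') then show ?thesis using k l1 l2 tl[of k'] by (simp add: nth_append)
      qed
      have b: "(vs @ tl ws) ! Suc i = ws ! Suc k" using k l1 tl[of k] by (simp add: nth_append)
      have c: "(ls @ ms) ! i = ms ! k" using k by (simp add: nth_append)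
      show ?thesis unfolding a b c using e2[OF k(1)] .
    qed
  qed
qed

lemma path_in_take:
  assumes "path_in E vs ls" "k \<le> length ls"
  shows "path_in E (take (Suc k) vs) (take k ls)"
  using assms by (auto simp: path_in_def min_def)

lemma path_in_drop:
  assumes "path_in E vs ls" "k \<le> length ls"
  shows "path_in E (drop k vs) (drop k ls)"
proof -
  have l: "length vs = Suc (length ls)" and e: "\<And>i. i < length ls \<Longrightarrow> (vs!i, vs!Suc i, ls!i) \<in> E"
    using assms(1) by (auto simp: path_in_def)
  show ?thesis unfolding path_in_def
  proof (intro conjI allI impI)
    show "length (drop k vs) = Suc (length (drop k ls))" using l assms(2) by simp
    fix i assume "i < length (drop k ls)"
    then have i: "k + i < length ls" by simp
    show "(drop k vs ! i, drop k vs ! Suc i, drop k ls ! i) \<in> E"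
      using e[OF i] i l by simp
  qed
qed

lemma path_in_hd_last:
  assumes "path_in E vs ls"
  shows "hd vs = vs ! 0" "last vs = vs ! length ls" "vs \<noteq> []"
proof -
  have l: "length vs = Suc (length ls)" using assms by (simp add: path_in_def)
  then show "vs \<noteq> []" by auto
  then show "hd vs = vs ! 0" by (simp add: hd_conv_nth)
  show "last vs = vs ! length ls" using l \<open>vs \<noteq> []\<close> by (simp add: last_conv_nth)
qed

lemma path_in_nodes:
  assumes aut: "automaton V E" and p: "path_in E vs ls" and ne: "ls \<noteq> []"
  shows "set vs \<subseteq> V"
proof
  fix v assume "v \<in> set vs"
  then obtain i where i: "i < length vs" "vs ! i = v" by (auto simp: in_set_conv_nth)
  have l: "length vs = Suc (length ls)" and e: "\<And>i. i < length ls \<Longrightarrow> (vs!i, vs!Suc i, ls!i) \<in> E"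
    using p by (auto simp: path_in_def)
  have EV: "\<And>a b c. (a, b, c) \<in> E \<Longrightarrow> a \<in> V \<and> b \<in> V" using aut by (auto simp: automaton_def)
  show "v \<in> V"
  proof (cases "i < length ls")
    case True then show ?thesis using EV[OF e[OF True]] i by simp
  next
    case False
    then have "i = Suc (length ls - 1)" using i l ne by auto
    moreover have "length ls - 1 < length ls" using ne by simp
    ultimately show ?thesis using EV[OF e[of "length ls - 1"]] i by simp
  qed
qed

lemma accepted_append:
  assumes "accepted E (ls @ ms)"
  shows "accepted E ls" "accepted E ms"
proof -
  obtain vs where p: "path_in E vs (ls @ ms)" using assms by (auto simp: accepted_def)
  show "accepted E ls" using path_in_take[OF p, of "length ls"] by (auto simp: accepted_def)
  show "accepted E ms" using path_in_drop[OF p, of "length ls"] by (auto simp: accepted_def)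
qed

lemma accepted_finite: fixes E :: "('v \<times> 'v \<times> 'l) set"
  shows "finite E \<Longrightarrow> finite {ls. length ls = t \<and> accepted E ls}"
proof -
  assume fE: "finite E"
  let ?L = "(\<lambda>(v, w, l). l) ` E"
  have "{ls. length ls = t \<and> accepted E ls} \<subseteq> {ls. set ls \<subseteq> ?L \<and> length ls = t}"
  proof
    fix ls :: "'l list" assume "ls \<in> {ls. length ls = t \<and> accepted E ls}"
    then have len: "length ls = t" and "accepted E ls" by auto
    then obtain vs where p: "path_in E vs ls" by (auto simp: accepted_def)
    have "set ls \<subseteq> ?L"
    proof
      fix l assume "l \<in> set ls"
      then obtain i where "i < length ls" "ls ! i = l" by (auto simp: in_set_conv_nth)
      then show "l \<in> ?L" using p unfolding path_in_def by (force simp: image_iff)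
    qed
    then show "ls \<in> {ls. set ls \<subseteq> ?L \<and> length ls = t}" using len by simp
  qed
  moreover have "finite {ls. set ls \<subseteq> ?L \<and> length ls = t}"
    using fE by (intro finite_lists_length_eq) auto
  ultimately show ?thesis by (rule finite_subset)
qed

lemma accepted_nonempty:
  assumes aut: "automaton V E" and ne: "E \<noteq> {}"
  shows "\<exists>ls. length ls = t \<and> accepted E ls"
proof -
  obtain a b l where ab: "(a, b, l) \<in> E" using ne by auto
  have abV: "a \<in> V" "b \<in> V" using aut ab by (auto simp: automaton_def)
  obtain vs ls where p: "path_in E vs ls" "hd vs = b" "last vs = a"
    using aut abV unfolding automaton_def by blast
  have p0: "path_in E [a, b] [l]" using ab by (auto simp: path_in_def nth_Cons split: nat.splits)
  define cv where "cv = [a, b] @ tl vs"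
  define cl where "cl = l # ls"
  have pc: "path_in E cv cl" unfolding cv_def cl_def using path_in_append[OF p0 p(1)] p(2) by simp
  have vsne: "vs \<noteq> []" using p(1) by (auto simp: path_in_def)
  have hc: "hd cv = a" by (simp add: cv_def)
  have lc: "last cv = a"
  proof (cases "tl vs = []")
    case True
    then have "vs = [b]" using vsne p(2) by (cases vs) auto
    then show ?thesis using p(3) by (simp add: cv_def)
  next
    case False
    then show ?thesis using p(3) vsne by (simp add: cv_def last_tl)
  qed
  have pow: "\<exists>ws. path_in E ws (concat (replicate k cl)) \<and> hd ws = a \<and> last ws = a" for k
  proof (induction k)
    case 0 then show ?case by (intro exI[of _ "[a]"]) (simp add: path_in_def)
  next
    case (Suc k)
    then obtain ws where ws: "path_in E ws (concat (replicate k cl))" "hd ws = a" "last ws = a" by blast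
    have "path_in E (ws @ tl cv) (concat (replicate k cl) @ cl)"
      using path_in_append[OF ws(1) pc] ws(3) hc by simp
    moreover have "concat (replicate k cl) @ cl = concat (replicate (Suc k) cl)"
      by (simp add: replicate_append_same[symmetric])
    moreover have "hd (ws @ tl cv) = a" using ws(2) path_in_hd_last(3)[OF ws(1)] by simp
    moreover have "last (ws @ tl cv) = a"
    proof -
      have tne: "tl cv \<noteq> []" by (simp add: cv_def)
      then have "last (ws @ tl cv) = last (tl cv)" by simp
      also have "\<dots> = last cv" using tne by (simp add: last_tl)
      finally show ?thesis using lc by simp
    qed
    ultimately show ?case by (intro exI[of _ "ws @ tl cv"]) simp
  qed
  obtain ws where ws: "path_in E ws (concat (replicate t cl))" using pow by blast
  have len: "length (concat (replicate t cl)) = t * length cl" by (simp add: length_concat sum_list_replicate)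
  have "t \<le> length (concat (replicate t cl))" unfolding len by (simp add: cl_def)
  then have "path_in E (take (Suc t) ws) (take t (concat (replicate t cl)))"
    by (rule path_in_take[OF ws])
  moreover have "length (take t (concat (replicate t cl))) = t" using \<open>t \<le> _\<close> by simp
  ultimately show ?thesis unfolding accepted_def by blast
qed

lemma fold_prodmat: fixes A :: "'l \<Rightarrow> real^'n^'n" and N :: "real^'n^'n" shows "fold (\<lambda>l M. A l ** M) ms N = prodmat A ms ** N"
proof (induction ms arbitrary: N)
  case Nil then show ?case by (simp add: prodmat_def)
next
  case (Cons m ms)
  have "prodmat A (m # ms) = prodmat A ms ** A m"
    using Cons[of "A m"] by (simp add: prodmat_def)
  then show ?case using Cons[of "A m ** N"] by (simp add: matrix_mul_assoc)
qed

lemma prodmat_append: "prodmat A (ls @ ms) = prodmat A ms ** prodmat A ls"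
proof -
  have "prodmat A (ls @ ms) = fold (\<lambda>l M. A l ** M) ms (prodmat A ls)" by (simp add: prodmat_def)
  then show ?thesis by (simp only: fold_prodmat)
qed

lemma prodmat_Nil: "prodmat A [] = mat 1" by (simp add: prodmat_def)

lemma matnorm_mult: "norm (M *v x) \<le> matnorm M * norm x"
  unfolding matnorm_def by (rule onorm) simp

lemma matnorm_nonneg: "0 \<le> matnorm M"
  unfolding matnorm_def by (rule onorm_pos_le) simp

lemma matnorm_le: "(\<And>x. norm (M *v x) \<le> b * norm x) \<Longrightarrow> matnorm M \<le> b"
  unfolding matnorm_def by (rule onorm_le)

lemma matnorm_mul: "matnorm (M ** N) \<le> matnorm M * matnorm N"
proof (rule matnorm_le)
  fix x
  have "norm ((M ** N) *v x) = norm (M *v (N *v x))" by (simp add: matrix_vector_mul_assoc)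
  also have "\<dots> \<le> matnorm M * norm (N *v x)" by (rule matnorm_mult)
  also have "\<dots> \<le> matnorm M * (matnorm N * norm x)"
    by (intro mult_left_mono matnorm_mult matnorm_nonneg)
  finally show "norm ((M ** N) *v x) \<le> matnorm M * matnorm N * norm x" by (simp add: mult.assoc)
qed

lemma matnorm_one: "matnorm (mat 1 :: real^'n^'n) = 1"
proof -
  have e: "((*v) (mat 1 :: real^'n^'n)) = (\<lambda>x. x)" by (rule ext) simp
  show ?thesis unfolding matnorm_def e by (rule onorm_id)
qed


lemma growth:
  fixes m :: "nat \<Rightarrow> real"
  assumes nn: "\<And>t. 0 \<le> m t" and sub: "\<And>s t. m (s + t) \<le> m s * m t"
    and k: "k \<ge> 1" and b: "b > 0" and mk: "m k \<le> b^k"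
  shows "\<exists>C>0. \<forall>t. m t \<le> C * b^t"
proof -
  define C where "C = 1 + (\<Sum>r<k. m r / b^r)"
  have S0: "0 \<le> (\<Sum>r<k. m r / b^r)" using nn b by (intro sum_nonneg) simp
  have C: "C > 0" using S0 by (simp add: C_def)
  have "m t \<le> C * b^t" for t
  proof (induction t rule: less_induct)
    case (less t)
    show ?case
    proof (cases "t < k")
      case True
      have "m t / b^t \<le> (\<Sum>r<k. m r / b^r)"
        using True nn b by (intro member_le_sum) auto
      then have "m t / b^t \<le> C" by (simp add: C_def)
      then show ?thesis using b by (simp add: divide_le_eq)
    next
      case False
      then have t: "t = k + (t - k)" by simp
      have IH: "m (t - k) \<le> C * b^(t-k)" using less k False by simp
      have "m t \<le> m k * m (t - k)" using sub[of k "t-k"] t by simp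
      also have "\<dots> \<le> b^k * (C * b^(t-k))"
        using mk IH nn b by (intro mult_mono) auto
      also have "\<dots> = C * b^t" using t by (metis mult.left_commute power_add)
      finally show ?thesis .
    qed
  qed
  with C show ?thesis by blast
qed

lemma fekete:
  fixes m :: "nat \<Rightarrow> real"
  assumes nn: "\<And>t. 0 \<le> m t" and sub: "\<And>s t. m (s + t) \<le> m s * m t"
  defines "L \<equiv> Inf ((\<lambda>k. root k (m k)) ` {1..})"
  shows "(\<lambda>t. root t (m t)) \<longlonglongrightarrow> L" "\<And>k. k \<ge> 1 \<Longrightarrow> L \<le> root k (m k)" "L \<ge> 0"
proof -
  let ?S = "(\<lambda>k. root k (m k)) ` {1..}"
  have ne: "?S \<noteq> {}" by auto
  have bdd: "bdd_below ?S" by (rule bdd_belowI[of _ 0]) (auto intro: real_root_ge_zero nn)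
  show low: "L \<le> root k (m k)" if "k \<ge> 1" for k
    unfolding L_def using that bdd by (intro cInf_lower) auto
  show L0: "L \<ge> 0" unfolding L_def using ne bdd
    by (subst le_cInf_iff) (auto intro: real_root_ge_zero nn)
  show "(\<lambda>t. root t (m t)) \<longlonglongrightarrow> L"
  proof (rule tendstoI)
    fix r :: real assume r: "r > 0"
    define e where "e = r / 3"
    have e: "e > 0" using r by (simp add: e_def)
    have "L < L + e" using e by simp
    then obtain x where "x \<in> ?S" "x < L + e" using cInf_lessD[OF ne] unfolding L_def by blast
    then obtain k where k: "k \<ge> 1" "root k (m k) < L + e" by auto
    define b where "b = L + e"
    have b: "b > 0" using L0 e by (simp add: b_def)
    have "m k = (root k (m k))^k" using k nn by simp
    also have "\<dots> \<le> b^k" using k by (intro power_mono) (auto simp: b_def intro: real_root_ge_zero nn)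
    finally obtain C where C: "C > 0" "\<And>t. m t \<le> C * b^t"
      using growth[OF nn sub k(1) b] by blast
    have ev1: "eventually (\<lambda>t. root t C < 1 + e / b) sequentially"
      using LIMSEQ_root_const[OF C(1)] e b
      by (auto dest!: order_tendstoD(2)[where a = "1 + e/b"])
    have ev2: "eventually (\<lambda>t::nat. t \<ge> 1) sequentially" by (rule eventually_ge_at_top)
    show "eventually (\<lambda>t. dist (root t (m t)) L < r) sequentially"
      using ev1 ev2
    proof eventually_elim
      case (elim t)
      have "root t (m t) \<le> root t (C * b^t)" using elim C by (intro real_root_le_mono) auto
      also have "\<dots> = root t C * b" using elim b by (simp add: real_root_mult real_root_power_cancel)
      also have "\<dots> < (1 + e / b) * b" using elim b by (intro mult_strict_right_mono) auto
      also have "\<dots> = L + 2 * e" using b by (simp add: field_simps b_def)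
      finally have "root t (m t) < L + 2 * e" .
      moreover have "L \<le> root t (m t)" using low elim by simp
      ultimately show ?case using e by (simp add: dist_real_def e_def)
    qed
  qed
qed

definition mx :: "('v \<times> 'v \<times> 'l) set \<Rightarrow> ('l \<Rightarrow> real^'n^'n) \<Rightarrow> nat \<Rightarrow> real" where
  "mx E A t = Max ((\<lambda>ls. matnorm (prodmat A ls)) ` {ls. length ls = t \<and> accepted E ls})"

context
  fixes V :: "'v set" and E :: "('v \<times> 'v \<times> 'l) set" and A :: "'l \<Rightarrow> real^'n^'n"
  assumes aut: "automaton V E" and neE: "E \<noteq> {}"
begin

lemma fin: "finite {ls. length ls = t \<and> accepted E ls}"
  using aut by (intro accepted_finite) (auto simp: automaton_def)

lemma nemp: "{ls. length ls = t \<and> accepted E ls} \<noteq> {}"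
  using accepted_nonempty[OF aut neE] by auto

lemma mx_ge: "length ls = t \<Longrightarrow> accepted E ls \<Longrightarrow> matnorm (prodmat A ls) \<le> mx E A t"
  unfolding mx_def using fin by (intro Max_ge) auto

lemma mx_le: "(\<And>ls. length ls = t \<Longrightarrow> accepted E ls \<Longrightarrow> matnorm (prodmat A ls) \<le> b) \<Longrightarrow> mx E A t \<le> b"
  unfolding mx_def using fin nemp by (subst Max_le_iff) auto

lemma mx_nonneg: "0 \<le> mx E A t"
proof -
  obtain ls where "length ls = t" "accepted E ls" using nemp by auto
  then show ?thesis using mx_ge[of ls t] matnorm_nonneg[of "prodmat A ls"] by linarith
qed

lemma mx_sub: "mx E A (s + t) \<le> mx E A s * mx E A t"
proof (rule mx_le)
  fix ls :: "'l list" assume l: "length ls = s + t" and a: "accepted E ls"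
  have sp: "ls = take s ls @ drop s ls" by simp
  have a1: "accepted E (take s ls)" "accepted E (drop s ls)"
    using accepted_append[of E "take s ls" "drop s ls"] a sp by auto
  have "matnorm (prodmat A ls) = matnorm (prodmat A (drop s ls) ** prodmat A (take s ls))"
    by (subst sp, subst prodmat_append) simp
  also have "\<dots> \<le> matnorm (prodmat A (drop s ls)) * matnorm (prodmat A (take s ls))"
    by (rule matnorm_mul)
  also have "\<dots> \<le> mx E A t * mx E A s"
    using l a1 by (intro mult_mono mx_ge matnorm_nonneg mx_nonneg) auto
  finally show "matnorm (prodmat A ls) \<le> mx E A s * mx E A t" by (simp add: mult.commute)
qed

lemma cjsr_mx: "cjsr E A = lim (\<lambda>t. root t (mx E A t))"
proof -
  have "root t (mx E A t) = Max ((\<lambda>ls. root t (matnorm (prodmat A ls))) ` {ls. length ls = t \<and> accepted E ls})" for t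
  proof -
    have mono: "mono (root t)"
    proof (cases "t = 0")
      case True then show ?thesis by (simp add: mono_def)
    next
      case False then show ?thesis by (auto simp: mono_def intro: real_root_le_mono)
    qed
    show ?thesis unfolding mx_def
      by (subst mono_Max_commute[OF mono]) (use fin nemp in \<open>auto simp: image_image\<close>)
  qed
  then show ?thesis unfolding cjsr_def by simp
qed

definition "LL = Inf ((\<lambda>k. root k (mx E A k)) ` {1..})"

lemma cjsr_props:
  shows "(\<lambda>t. root t (mx E A t)) \<longlonglongrightarrow> cjsr E A"
    "\<And>k. k \<ge> 1 \<Longrightarrow> cjsr E A \<le> root k (mx E A k)" "cjsr E A \<ge> 0"
proof -
  note f = fekete[of "mx E A", OF mx_nonneg mx_sub]
  have c: "cjsr E A = Inf ((\<lambda>k. root k (mx E A k)) ` {1..})"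
    unfolding cjsr_mx using f(1) by (rule limI)
  show "(\<lambda>t. root t (mx E A t)) \<longlonglongrightarrow> cjsr E A" using f(1) c by simp
  show "\<And>k. k \<ge> 1 \<Longrightarrow> cjsr E A \<le> root k (mx E A k)" using f(2) c by simp
  show "cjsr E A \<ge> 0" using f(3) c by simp
qed

lemma cjsr_growth:
  assumes b: "b > cjsr E A"
  shows "\<exists>C>0. \<forall>t. mx E A t \<le> C * b^t"
proof -
  have "eventually (\<lambda>t. root t (mx E A t) < b) sequentially"
    using cjsr_props(1) b by (rule order_tendstoD)
  moreover have "eventually (\<lambda>t::nat. t \<ge> 1) sequentially" by (rule eventually_ge_at_top)
  ultimately have "eventually (\<lambda>t. root t (mx E A t) < b \<and> t \<ge> 1) sequentially"
    by (rule eventually_conj)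
  then obtain k where k: "root k (mx E A k) < b" "k \<ge> 1"
    by (auto simp: eventually_sequentially)
  have b0: "b > 0" using b cjsr_props(3) by simp
  have "mx E A k = (root k (mx E A k))^k" using k mx_nonneg by simp
  also have "\<dots> \<le> b^k" using k by (intro power_mono) (auto intro: real_root_ge_zero mx_nonneg)
  finally show ?thesis using growth[of "mx E A", OF mx_nonneg mx_sub k(2) b0] by blast
qed

end


lemma continuous_qf_x: "continuous_on S (\<lambda>x. qf P x)"
  unfolding qf_sum by (intro continuous_intros)

lemma qf_scale: "qf P (c *\<^sub>R x) = c^2 * qf P x"
  by (simp add: qf_def matrix_vector_mult_scaleR power2_eq_square)

lemma qf_upper: "qf P x \<le> matnorm P * (norm x)^2"
proof -
  have "qf P x \<le> norm x * norm (P *v x)" unfolding qf_def by (rule norm_cauchy_schwarz)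
  also have "\<dots> \<le> norm x * (matnorm P * norm x)" by (intro mult_left_mono matnorm_mult) simp
  finally show ?thesis by (simp add: power2_eq_square mult_ac)
qed

lemma pd_lower:
  fixes P :: "real^'n^'n"
  assumes "pd P"
  shows "\<exists>a>0. \<forall>x. a * (norm x)^2 \<le> qf P x"
proof -
  have cpt: "compact (sphere (0::real^'n) 1)" by (rule compact_sphere)
  have ne: "sphere (0::real^'n) 1 \<noteq> {}"
    using norm_axis_1[of undefined] by (auto simp: sphere_def intro!: exI[of _ "axis undefined 1"])
  obtain x0 where x0: "x0 \<in> sphere 0 1" "\<And>y. y \<in> sphere 0 1 \<Longrightarrow> qf P x0 \<le> qf P y"
    using continuous_attains_inf[OF cpt ne continuous_qf_x] by blast
  have "x0 \<noteq> 0" using x0(1) by auto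
  then have a: "qf P x0 > 0" using assms by (simp add: pd_def qf_def)
  have "qf P x0 * (norm x)^2 \<le> qf P x" for x
  proof (cases "x = 0")
    case True then show ?thesis by (simp add: qf_def)
  next
    case False
    define u where "u = (1 / norm x) *\<^sub>R x"
    have "u \<in> sphere 0 1" using False by (simp add: u_def)
    then have "qf P x0 \<le> qf P u" by (rule x0(2))
    also have "qf P u = qf P x / (norm x)^2" by (simp add: u_def qf_scale power_divide)
    finally show ?thesis using False by (simp add: le_divide_eq)
  qed
  with a show ?thesis by blast
qed

lemma edge_ineq:
  fixes M Qv Qw :: "real^'n^'n"
  assumes "psd (\<gamma>\<^sup>2 *\<^sub>R Qv - transpose M ** Qw ** M)"
  shows "qf Qw (M *v x) \<le> \<gamma>^2 * qf Qv x"
proof -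
  have "0 \<le> x \<bullet> ((\<gamma>\<^sup>2 *\<^sub>R Qv - transpose M ** Qw ** M) *v x)" using assms by (simp add: psd_def)
  also have "x \<bullet> ((\<gamma>\<^sup>2 *\<^sub>R Qv - transpose M ** Qw ** M) *v x) = \<gamma>^2 * qf Qv x - qf Qw (M *v x)"
  proof -
    have "x \<bullet> ((transpose M ** Qw ** M) *v x) = x \<bullet> (transpose M *v (Qw *v (M *v x)))"
      by (simp add: matrix_vector_mul_assoc matrix_mul_assoc)
    also have "\<dots> = (M *v x) \<bullet> (Qw *v (M *v x))"
      using dot_lmul_matrix[of "Qw *v (M *v x)" M x] by (simp add: inner_commute)
    finally have "x \<bullet> ((transpose M ** Qw ** M) *v x) = qf Qw (M *v x)" by (simp add: qf_def)
    then show ?thesis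
      by (simp add: qf_def matrix_vector_mult_diff_rdistrib scaleR_matrix_vector_assoc[symmetric] inner_diff_right)
  qed
  finally show ?thesis by simp
qed


lemma lift_edge_path:
  assumes p: "path_in E vs ls" "length ls = T"
  shows "(hd vs, last vs, ls) \<in> lift_edges E T"
  using p unfolding lift_edges_def by blast

lemma lyap_induct:
  assumes ed: "\<forall>(v, w, l) \<in> lift_edges E T. psd (\<gamma>\<^sup>2 *\<^sub>R Q v - transpose (prodmat A l) ** Q w ** prodmat A l)"
  shows "path_in E vs ls \<Longrightarrow> length ls = k * T \<Longrightarrow>
     qf (Q (last vs)) (prodmat A ls *v x) \<le> \<gamma>^(2*k) * qf (Q (hd vs)) x"
proof (induction k arbitrary: vs ls)
  case 0
  then have "ls = []" by simp
  moreover have "hd vs = last vs" using 0 path_in_hd_last[OF 0(1)] \<open>ls = []\<close> by simp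
  ultimately show ?case by (simp add: prodmat_Nil)
next
  case (Suc k)
  define p where "p = k * T"
  have lp: "length ls = p + T" using Suc(3) by (simp add: p_def)
  define ls1 where "ls1 = take p ls"
  define ls2 where "ls2 = drop p ls"
  define vs1 where "vs1 = take (Suc p) vs"
  define vs2 where "vs2 = drop p vs"
  have p1: "path_in E vs1 ls1" unfolding vs1_def ls1_def by (rule path_in_take[OF Suc(2)]) (use lp in simp)
  have p2: "path_in E vs2 ls2" unfolding vs2_def ls2_def by (rule path_in_drop[OF Suc(2)]) (use lp in simp)
  have l1: "length ls1 = k * T" using lp by (simp add: ls1_def p_def)
  have l2: "length ls2 = T" using lp by (simp add: ls2_def)
  have lv: "length vs = Suc (length ls)" using Suc(2) by (simp add: path_in_def)
  have h1: "hd vs1 = hd vs"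
    using path_in_hd_last(1)[OF p1] path_in_hd_last(1)[OF Suc(2)] by (simp add: vs1_def)
  have m1: "last vs1 = vs ! p"
    using path_in_hd_last(2)[OF p1] l1 by (simp add: vs1_def p_def)
  have m2: "hd vs2 = vs ! p"
    using path_in_hd_last(1)[OF p2] lp lv by (simp add: vs2_def)
  have e2: "last vs2 = last vs"
    using path_in_hd_last(2)[OF p2] path_in_hd_last(2)[OF Suc(2)] lp lv l2 by (simp add: vs2_def)
  have edge: "(vs ! p, last vs, ls2) \<in> lift_edges E T"
    using lift_edge_path[OF p2 l2] m2 e2 by simp
  have pm: "prodmat A ls = prodmat A ls2 ** prodmat A ls1"
    using prodmat_append[of A ls1 ls2] by (simp add: ls1_def ls2_def)
  have "qf (Q (last vs)) (prodmat A ls *v x) = qf (Q (last vs)) (prodmat A ls2 *v (prodmat A ls1 *v x))"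
    by (simp add: pm matrix_vector_mul_assoc)
  also have "\<dots> \<le> \<gamma>^2 * qf (Q (vs ! p)) (prodmat A ls1 *v x)"
    by (rule edge_ineq) (use ed edge in blast)
  also have "\<dots> \<le> \<gamma>^2 * (\<gamma>^(2*k) * qf (Q (hd vs)) x)"
    using Suc.IH[OF p1 l1] h1 m1 by (intro mult_left_mono) auto
  also have "\<dots> = \<gamma>^(2 * Suc k) * qf (Q (hd vs)) x"
  proof -
    have "\<gamma>^(2 * Suc k) = \<gamma>^2 * \<gamma>^(2*k)" by (simp only: mult_Suc_right power_add)
    then show ?thesis by (simp only: mult.assoc)
  qed
  finally show ?case .
qed

lemma lower_bound:
  fixes V :: "'v set" and E :: "('v \<times> 'v \<times> 'l) set" and A :: "'l \<Rightarrow> real^'n^'n"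
  assumes aut: "automaton V E" and neE: "E \<noteq> {}" and T1: "T \<ge> 1" and g: "\<gamma> \<ge> 0"
    and Q: "\<forall>v\<in>V. transpose (Q v) = Q v \<and> pd (Q v)"
    and ed: "\<forall>(v, w, l) \<in> lift_edges E T. psd (\<gamma>\<^sup>2 *\<^sub>R Q v - transpose (prodmat A l) ** Q w ** prodmat A l)"
  shows "cjsr E A \<le> root T \<gamma>"
proof -
  have finV: "finite V" and neV: "V \<noteq> {}" using aut by (auto simp: automaton_def)
  define a where "a v = (SOME a. a > 0 \<and> (\<forall>x. a * (norm x)^2 \<le> qf (Q v) x))" for v
  have a: "a v > 0 \<and> (\<forall>x. a v * (norm x)^2 \<le> qf (Q v) x)" if "v \<in> V" for v
    unfolding a_def by (rule someI_ex) (use pd_lower Q that in blast)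
  define am where "am = Min (a ` V)"
  define Bm where "Bm = Max ((\<lambda>v. matnorm (Q v)) ` V)"
  have am: "am > 0" "\<And>v. v \<in> V \<Longrightarrow> am \<le> a v"
    using finV neV a by (auto simp: am_def)
  have Bm: "\<And>v. v \<in> V \<Longrightarrow> matnorm (Q v) \<le> Bm" using finV by (auto simp: Bm_def)
  have Bm0: "Bm \<ge> 0" using neV Bm matnorm_nonneg by (meson all_not_in_conv order_trans)
  define D where "D = sqrt (Bm / am)"
  have D0: "D \<ge> 0" using Bm0 am(1) by (simp add: D_def)
  have bound: "mx E A (k * T) \<le> D * \<gamma>^k" if k: "k \<ge> 1" for k
  proof (rule mx_le[OF aut neE])
    fix ls assume l: "length ls = k * T" and acc: "accepted E ls"
    obtain vs where p: "path_in E vs ls" using acc by (auto simp: accepted_def)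
    have "ls \<noteq> []" using l k T1 by (cases ls) auto
    then have sV: "set vs \<subseteq> V" by (rule path_in_nodes[OF aut p])
    have hV: "hd vs \<in> V" "last vs \<in> V" using sV path_in_hd_last(3)[OF p] by auto
    show "matnorm (prodmat A ls) \<le> D * \<gamma>^k"
    proof (rule matnorm_le)
      fix x
      let ?y = "prodmat A ls *v x"
      have "am * (norm ?y)^2 \<le> a (last vs) * (norm ?y)^2"
        using am(2)[OF hV(2)] by (intro mult_right_mono) auto
      also have "\<dots> \<le> qf (Q (last vs)) ?y" using a[OF hV(2)] by blast
      also have "\<dots> \<le> \<gamma>^(2*k) * qf (Q (hd vs)) x" by (rule lyap_induct[OF ed p l])
      also have "\<dots> \<le> \<gamma>^(2*k) * (Bm * (norm x)^2)"
      proof (intro mult_left_mono)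
        have "qf (Q (hd vs)) x \<le> matnorm (Q (hd vs)) * (norm x)^2" by (rule qf_upper)
        also have "\<dots> \<le> Bm * (norm x)^2" using Bm[OF hV(1)] by (intro mult_right_mono) auto
        finally show "qf (Q (hd vs)) x \<le> Bm * (norm x)^2" .
      qed (use g in simp)
      finally have "am * (norm ?y)^2 \<le> \<gamma>^(2*k) * (Bm * (norm x)^2)" .
      then have "(norm ?y)^2 \<le> (Bm / am) * (\<gamma>^k * norm x)^2"
        using am(1) by (simp add: field_simps power_mult_distrib power_mult mult.commute)
      also have "\<dots> = (D * \<gamma>^k * norm x)^2"
        using Bm0 am(1) by (simp add: D_def power_mult_distrib)
      finally have "(norm ?y)^2 \<le> (D * \<gamma>^k * norm x)^2" .
      then show "norm ?y \<le> D * \<gamma>^k * norm x"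
        by (rule power2_le_imp_le) (use D0 g in simp)
    qed
  qed
  have le: "cjsr E A \<le> root (k * T) D * root T \<gamma>" if k: "k \<ge> 1" for k
  proof -
    have "cjsr E A \<le> root (k * T) (mx E A (k * T))"
      using cjsr_props(2)[OF aut neE, of "k*T"] k T1 by simp
    also have "\<dots> \<le> root (k * T) (D * \<gamma>^k)"
      using bound[OF k] k T1 by (intro real_root_le_mono) auto
    also have "\<dots> = root (k * T) D * root T \<gamma>"
    proof -
      have "root (k * T) (\<gamma>^k) = root T (root k (\<gamma>^k))"
        by (simp add: real_root_mult_exp mult.commute)
      also have "\<dots> = root T \<gamma>" using k g by (simp add: real_root_power_cancel)
      finally show ?thesis by (simp add: real_root_mult)
    qed
    finally show ?thesis .
  qed
  show ?thesis
  proof (cases "D = 0")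
    case True
    then have "cjsr E A \<le> 0" using le[of 1] by simp
    then show ?thesis using g real_root_ge_zero[of \<gamma> T] by linarith
  next
    case False
    then have Dp: "D > 0" using D0 by simp
    have sm: "strict_mono (\<lambda>k. k * T)" using T1 by (simp add: strict_mono_def)
    have "(\<lambda>k. root (k * T) D) \<longlonglongrightarrow> 1"
      using LIMSEQ_subseq_LIMSEQ[OF LIMSEQ_root_const[OF Dp] sm] by (simp add: o_def)
    then have "(\<lambda>k. root (k * T) D * root T \<gamma>) \<longlonglongrightarrow> 1 * root T \<gamma>"
      by (intro tendsto_mult tendsto_const)
    then have lim: "(\<lambda>k. root (k * T) D * root T \<gamma>) \<longlonglongrightarrow> root T \<gamma>" by simp
    have "\<exists>N. \<forall>k\<ge>N. cjsr E A \<le> root (k * T) D * root T \<gamma>" using le by blast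
    with lim show ?thesis by (rule LIMSEQ_le_const)
  qed
qed


lemma qf_psd_expand:
  fixes M Qv Qw :: "real^'n^'n"
  shows "x \<bullet> ((\<gamma>\<^sup>2 *\<^sub>R Qv - transpose M ** Qw ** M) *v x) = \<gamma>^2 * qf Qv x - qf Qw (M *v x)"
proof -
  have "x \<bullet> ((transpose M ** Qw ** M) *v x) = x \<bullet> (transpose M *v (Qw *v (M *v x)))"
    by (simp add: matrix_vector_mul_assoc matrix_mul_assoc)
  also have "\<dots> = (M *v x) \<bullet> (Qw *v (M *v x))"
    using dot_lmul_matrix[of "Qw *v (M *v x)" M x] by (simp add: inner_commute)
  finally have "x \<bullet> ((transpose M ** Qw ** M) *v x) = qf Qw (M *v x)" by (simp add: qf_def)
  then show ?thesis
    by (simp add: qf_def matrix_vector_mult_diff_rdistrib scaleR_matrix_vector_assoc[symmetric] inner_diff_right)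
qed

lemma upper_member:
  fixes V :: "'v set" and E :: "('v \<times> 'v \<times> 'l) set" and A :: "'l \<Rightarrow> real^'n^'n"
  assumes aut: "automaton V E" and neE: "E \<noteq> {}" and T1: "T \<ge> 1" and mu: "\<mu> > cjsr E A ^ T"
  shows "\<exists>Q. (\<forall>v\<in>V. transpose (Q v) = Q v \<and> pd (Q v)) \<and>
     (\<forall>(v, w, l) \<in> lift_edges E T. psd ((sqrt (real CARD('n)) * \<mu>)\<^sup>2 *\<^sub>R Q v - transpose (prodmat A l) ** Q w ** prodmat A l))"
proof -
  define c where "c = cjsr E A"
  have c0: "c \<ge> 0" unfolding c_def by (rule cjsr_props(3)[OF aut neE])
  have mu0: "\<mu> > 0" using mu c0 unfolding c_def[symmetric] by (meson le_less_trans zero_le_power)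
  define b where "b = root T \<mu>"
  have bc: "b > c"
  proof -
    have "c = root T (c^T)" using T1 c0 by (simp add: real_root_power_cancel)
    also have "\<dots> < b" unfolding b_def using T1 mu by (intro real_root_less_mono) (auto simp: c_def)
    finally show ?thesis .
  qed
  have bT: "b^T = \<mu>" using T1 mu0 by (simp add: b_def)
  obtain C where C: "C > 0" "\<And>t. mx E A t \<le> C * b^t"
    using cjsr_growth[OF aut neE, where b=b and A=A] bc by (auto simp: c_def)
  define F where "F v = {(1/\<mu>^k) *\<^sub>R prodmat A ls | k ls. \<exists>vs. path_in E vs ls \<and> hd vs = v \<and> length ls = k * T}" for v
  define N where "N v x = Sup ((\<lambda>M. norm (M *v x)) ` F v)" for v x
  have Fb: "norm (M *v x) \<le> C * norm x" if "M \<in> F v" for M v x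
  proof -
    obtain k ls vs where M: "M = (1/\<mu>^k) *\<^sub>R prodmat A ls" and p: "path_in E vs ls" and l: "length ls = k * T"
      using \<open>M \<in> F v\<close> by (auto simp: F_def)
    have acc: "accepted E ls" using p by (auto simp: accepted_def)
    have "norm (M *v x) = (1/\<mu>^k) * norm (prodmat A ls *v x)"
      using mu0 by (simp add: M scaleR_matrix_vector_assoc[symmetric])
    also have "\<dots> \<le> (1/\<mu>^k) * (mx E A (k*T) * norm x)"
    proof (intro mult_left_mono)
      have "norm (prodmat A ls *v x) \<le> matnorm (prodmat A ls) * norm x" by (rule matnorm_mult)
      also have "\<dots> \<le> mx E A (k*T) * norm x" using mx_ge[OF aut neE l acc] by (intro mult_right_mono) auto
      finally show "norm (prodmat A ls *v x) \<le> mx E A (k*T) * norm x" .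
    qed (use mu0 in simp)
    also have "\<dots> \<le> (1/\<mu>^k) * ((C * b^(k*T)) * norm x)"
      using C(2)[of "k*T"] mu0 by (intro mult_left_mono mult_right_mono) auto
    also have "b^(k*T) = \<mu>^k" using bT by (simp add: power_mult mult.commute)
    finally show ?thesis using mu0 by simp
  qed
  have IF: "mat 1 \<in> F v" for v
  proof -
    have "path_in E [v] []" by (simp add: path_in_def)
    then have "(1/\<mu>^0) *\<^sub>R prodmat A [] \<in> F v" unfolding F_def by force
    then show ?thesis by (simp add: prodmat_Nil)
  qed
  have Fne: "F v \<noteq> {}" for v using IF by auto
  have bdd: "bdd_above ((\<lambda>M. norm (M *v x)) ` F v)" for v x
    using Fb by (intro bdd_aboveI[of _ "C * norm x"]) auto
  have Nup: "N v x \<le> C * norm x" for v x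
    unfolding N_def using Fb Fne by (intro cSUP_least) auto
  have Ngen: "norm (M *v x) \<le> N v x" if "M \<in> F v" for M v x
    unfolding N_def using that bdd by (rule cSUP_upper)
  have Nlo: "norm x \<le> N v x" for v x using Ngen[OF IF, of x v] by simp
  have Ntri: "N v (x + y) \<le> N v x + N v y" for v x y
    unfolding N_def[of v "x+y"] using Fne
  proof (intro cSUP_least)
    fix M assume "M \<in> F v"
    have "norm (M *v (x + y)) \<le> norm (M *v x) + norm (M *v y)"
      by (simp add: matrix_vector_right_distrib norm_triangle_ineq)
    also have "\<dots> \<le> N v x + N v y" using Ngen[OF \<open>M \<in> F v\<close>] by (intro add_mono)
    finally show "norm (M *v (x + y)) \<le> N v x + N v y" .
  qed auto
  have Nhle: "N v (a *\<^sub>R x) \<le> \<bar>a\<bar> * N v x" for v a x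
    unfolding N_def[of v "a *\<^sub>R x"] using Fne
  proof (intro cSUP_least)
    fix M assume "M \<in> F v"
    have "norm (M *v (a *\<^sub>R x)) = \<bar>a\<bar> * norm (M *v x)" by (simp add: matrix_vector_mult_scaleR)
    also have "\<dots> \<le> \<bar>a\<bar> * N v x" using Ngen[OF \<open>M \<in> F v\<close>] by (intro mult_left_mono) auto
    finally show "norm (M *v (a *\<^sub>R x)) \<le> \<bar>a\<bar> * N v x" .
  qed auto
  have Nhom: "N v (a *\<^sub>R x) = \<bar>a\<bar> * N v x" for v a x
  proof (cases "a = 0")
    case True
    then show ?thesis using Nhle[of v a x] Nlo[of "a *\<^sub>R x" v] by simp
  next
    case False
    have "N v x = N v ((1/a) *\<^sub>R (a *\<^sub>R x))" using False by simp
    also have "\<dots> \<le> \<bar>1/a\<bar> * N v (a *\<^sub>R x)" by (rule Nhle)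
    finally have "\<bar>a\<bar> * N v x \<le> N v (a *\<^sub>R x)" using False by (simp add: field_simps)
    then show ?thesis using Nhle[of v a x] by simp
  qed
  define Q where "Q v = (SOME P. transpose P = P \<and> pd P \<and> (\<forall>x. qf P x \<le> (N v x)^2) \<and>
          (\<forall>x. (N v x)^2 \<le> CARD('n) * qf P x))" for v
  have Q: "transpose (Q v) = Q v \<and> pd (Q v) \<and> (\<forall>x. qf (Q v) x \<le> (N v x)^2) \<and>
          (\<forall>x. (N v x)^2 \<le> CARD('n) * qf (Q v) x)" for v
    unfolding Q_def by (rule someI_ex, rule john[of "N v" C]) (auto intro: Ntri Nhom Nlo Nup)
  have edge: "N w (prodmat A l *v x) \<le> \<mu> * N v x" if e: "(v, w, l) \<in> lift_edges E T" for v w l x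
  proof -
    obtain vs0 where p0: "path_in E vs0 l" "hd vs0 = v" "last vs0 = w" and l0: "length l = T"
      using e by (auto simp: lift_edges_def)
    show ?thesis unfolding N_def[of w] using Fne
    proof (intro cSUP_least)
      fix M assume "M \<in> F w"
      then obtain k ls vs where M: "M = (1/\<mu>^k) *\<^sub>R prodmat A ls" and p: "path_in E vs ls" "hd vs = w"
        and l: "length ls = k * T" by (auto simp: F_def)
      have pp: "path_in E (vs0 @ tl vs) (l @ ls)" using path_in_append[OF p0(1) p(1)] p0(3) p(2) by simp
      have hh: "hd (vs0 @ tl vs) = v" using p0(2) path_in_hd_last(3)[OF p0(1)] by simp
      have ll: "length (l @ ls) = Suc k * T" using l l0 by simp
      have M2: "(1/\<mu>^(Suc k)) *\<^sub>R prodmat A (l @ ls) \<in> F v"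
        unfolding F_def using pp hh ll by blast
      let ?z = "prodmat A ls *v (prodmat A l *v x)"
      have eq1: "M *v (prodmat A l *v x) = (1/\<mu>^k) *\<^sub>R ?z"
        by (simp add: M scaleR_matrix_vector_assoc[symmetric])
      have eq2: "((1/\<mu>^(Suc k)) *\<^sub>R prodmat A (l @ ls)) *v x = (1/\<mu>^(Suc k)) *\<^sub>R ?z"
        by (simp add: prodmat_append scaleR_matrix_vector_assoc[symmetric] matrix_vector_mul_assoc)
      have "norm (M *v (prodmat A l *v x)) = \<mu> * norm (((1/\<mu>^(Suc k)) *\<^sub>R prodmat A (l @ ls)) *v x)"
        unfolding eq1 eq2 using mu0 by simp
      also have "\<dots> \<le> \<mu> * N v x" using Ngen[OF M2] mu0 by (intro mult_left_mono) auto
      finally show "norm (M *v (prodmat A l *v x)) \<le> \<mu> * N v x" .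
    qed auto
  qed
  have "\<forall>(v, w, l) \<in> lift_edges E T. psd ((sqrt (real CARD('n)) * \<mu>)\<^sup>2 *\<^sub>R Q v - transpose (prodmat A l) ** Q w ** prodmat A l)"
  proof (clarify)
    fix v w l assume e: "(v, w, l) \<in> lift_edges E T"
    show "psd ((sqrt (real CARD('n)) * \<mu>)\<^sup>2 *\<^sub>R Q v - transpose (prodmat A l) ** Q w ** prodmat A l)"
      unfolding psd_def qf_psd_expand
    proof
      fix x
      let ?y = "prodmat A l *v x"
      have "qf (Q w) ?y \<le> (N w ?y)^2" using Q by blast
      also have "\<dots> \<le> (\<mu> * N v x)^2"
        using edge[OF e, of x] Nlo[of ?y w] norm_ge_zero[of ?y] by (intro power_mono) linarith+
      also have "\<dots> = \<mu>^2 * (N v x)^2" by (simp add: power_mult_distrib)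
      also have "\<dots> \<le> \<mu>^2 * (CARD('n) * qf (Q v) x)" using Q by (intro mult_left_mono) auto
      also have "\<dots> = (sqrt (real CARD('n)) * \<mu>)^2 * qf (Q v) x" by (simp add: power_mult_distrib)
      finally show "0 \<le> (sqrt (real CARD('n)) * \<mu>)^2 * qf (Q v) x - qf (Q w) ?y" by simp
    qed
  qed
  then show ?thesis using Q by blast
qed


theorem corollary3p5:
  fixes V :: "'v set" and E :: "('v \<times> 'v \<times> 'l) set" and A :: "'l \<Rightarrow> real^'n^'n"
    and r :: real and T :: nat
  assumes "automaton V E" and "E \<noteq> {}" and "CARD('n) \<ge> 2" and "r > 0"
    and "T = nat \<lceil>ln (real CARD('n)) / (2 * ln (1 + r))\<rceil>"
  shows "cjsr E A \<le> root T (gamma_star V (lift_edges E T) (prodmat A)) \<and>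
         root T (gamma_star V (lift_edges E T) (prodmat A)) \<le> (1 + r) * cjsr E A"
proof -
  note aut = assms(1) and neE = assms(2) and n2 = assms(3) and r = assms(4) and Tdef = assms(5)
  define n where "n = real CARD('n)"
  have n2': "n \<ge> 2" using n2 by (simp add: n_def)
  have lnn: "ln n > 0" using n2' by (intro ln_gt_zero) simp
  have lnr: "ln (1 + r) > 0" using r by (intro ln_gt_zero) simp
  have Tge: "real T \<ge> ln n / (2 * ln (1 + r))" unfolding Tdef n_def by (rule real_nat_ceiling_ge)
  have T1: "T \<ge> 1"
  proof -
    have "ln n / (2 * ln (1 + r)) > 0" using lnn lnr by simp
    then have "real T > 0" using Tge by linarith
    then show ?thesis by simp
  qed
  define c where "c = cjsr E A"
  have c0: "c \<ge> 0" unfolding c_def by (rule cjsr_props(3)[OF aut neE])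
  define G where "G = {\<gamma>. \<gamma> \<ge> 0 \<and> (\<exists>Q :: 'v \<Rightarrow> real^'n^'n.
      (\<forall>v \<in> V. transpose (Q v) = Q v \<and> pd (Q v)) \<and>
      (\<forall>(v, w, l) \<in> lift_edges E T. psd (\<gamma>\<^sup>2 *\<^sub>R Q v - transpose (prodmat A l) ** Q w ** prodmat A l)))}"
  define g where "g = gamma_star V (lift_edges E T) (prodmat A)"
  have gG: "g = Inf G" unfolding g_def G_def gamma_star_def ..
  have mem: "sqrt n * \<mu> \<in> G" if mu: "\<mu> > c^T" for \<mu>
  proof -
    have "\<mu> > 0" using mu c0 by (meson le_less_trans zero_le_power)
    then show ?thesis using upper_member[OF aut neE T1, of A \<mu>] mu
      unfolding G_def n_def c_def by auto
  qed
  have Gne: "G \<noteq> {}" using mem[of "c^T + 1"] by auto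
  have Gbdd: "bdd_below G" unfolding G_def by (rule bdd_belowI[of _ 0]) auto
  have lowG: "c^T \<le> \<gamma>" if "\<gamma> \<in> G" for \<gamma>
  proof -
    from that obtain Q where g0: "\<gamma> \<ge> 0" and Q: "\<forall>v \<in> V. transpose (Q v) = Q v \<and> pd (Q v)"
      and ed: "\<forall>(v, w, l) \<in> lift_edges E T. psd (\<gamma>\<^sup>2 *\<^sub>R Q v - transpose (prodmat A l) ** Q w ** prodmat A l)"
      unfolding G_def by blast
    have "c \<le> root T \<gamma>" unfolding c_def by (rule lower_bound[OF aut neE T1 g0 Q ed])
    then have "c^T \<le> (root T \<gamma>)^T" using c0 by (intro power_mono) auto
    also have "\<dots> = \<gamma>" using T1 g0 by simp
    finally show ?thesis .
  qed
  have cg: "c^T \<le> g" unfolding gG using Gne lowG by (intro cInf_greatest) auto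
  have g0: "g \<ge> 0" using cg c0 by (meson order_trans zero_le_power)
  have part1: "c \<le> root T g"
  proof -
    have "c = root T (c^T)" using T1 c0 by (simp add: real_root_power_cancel)
    also have "\<dots> \<le> root T g" using T1 cg by (intro real_root_le_mono) auto
    finally show ?thesis .
  qed
  have sn: "sqrt n > 0" using n2' by simp
  have gup: "g \<le> sqrt n * c^T"
  proof -
    have "g / sqrt n \<le> c^T"
    proof (rule dense_ge)
      fix y assume "c^T < y"
      then have "g \<le> sqrt n * y" unfolding gG using Gbdd mem by (intro cInf_lower) auto
      then show "g / sqrt n \<le> y" using sn by (simp add: divide_le_eq mult.commute)
    qed
    then show ?thesis using sn by (simp add: divide_le_eq mult.commute)
  qed
  have rn: "root T (sqrt n) \<le> 1 + r"
  proof -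
    have "ln n \<le> real (2 * T) * ln (1 + r)" using Tge lnr by (simp add: divide_le_eq mult_ac)
    also have "\<dots> = ln ((1 + r)^(2*T))" using r by (simp add: ln_realpow)
    finally have "n \<le> (1 + r)^(2*T)" using n2' r by simp
    then have "sqrt n \<le> sqrt (((1 + r)^T)^2)" by (simp add: power_mult[symmetric] mult.commute)
    also have "\<dots> = (1 + r)^T" using r by simp
    finally have "root T (sqrt n) \<le> root T ((1 + r)^T)" using T1 by (intro real_root_le_mono) auto
    also have "\<dots> = 1 + r" using T1 r by (simp add: real_root_power_cancel)
    finally show ?thesis .
  qed
  have part2: "root T g \<le> (1 + r) * c"
  proof -
    have "root T g \<le> root T (sqrt n * c^T)" using T1 gup by (intro real_root_le_mono) auto
    also have "\<dots> = root T (sqrt n) * c" using T1 c0 by (simp add: real_root_mult real_root_power_cancel)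
    also have "\<dots> \<le> (1 + r) * c" using rn c0 by (intro mult_right_mono)
    finally show ?thesis .
  qed
  show ?thesis using part1 part2 unfolding g_def c_def by simp
qed


end
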